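(* Let $\bm\mu=(\mu_1,\dots,\mu_r)$ be finite positive Borel measures on the unit circle with infinite supports, fix the square-root branch as in the context, let $\bm n\in\mathbb N^r$ and $\tau\in\partial\mathbb D$. Then $\bm n$ is $\phi$-normal if and only if there is no nonzero $X\in\operatorname{span}\{z^p\}_{p=-(|\bm n|-1)/2}^{(|\bm n|-1)/2}$ such that $X(z)=\tau\overline{X(1/\bar z)}$ and $\int X(z)z^{-p}\,d\mu_j(z)=0$ for $p=-(n_j-1)/2,\dots,(n_j-1)/2$, $j=1,\dots,r$.
   Context: $\partial\mathbb D=\{|z|=1\}$. Fix $t_0\in\mathbb R$ and let $z^{k/2}=|z|^{k/2}\exp(ik\arg_{[t_0,t_0+2\pi)}(z)/2)$ for $k\in\mathbb Z$. $|\bm n|=\sum_j n_j$; $\operatorname{span}\{z^p\}_{p=a}^b$ ($b-a\in\mathbb Z$) is the span of $z^a,z^{a+1},\dots,z^b$ (zero space if $a>b$; the range of $p$ in an orthogonality condition is empty when $n_j=0$). $\bm n$ is $\phi$-normal if there is a unique $\phi\in\operatorname{span}\{z^p\}_{p=-|\bm n|/2}^{|\bm n|/2}$ with coefficient of $z^{|\bm n|/2}$ equal to $1$ and $\int\phi(z)z^{-p}\,d\mu_j(z)=0$ for $p=-n_j/2,\dots,n_j/2-1$, $j=1,\dots,r$ (by convention $\bm 0$ is $\phi$-normal). *)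

theory Defs
  imports "HOL-Analysis.Analysis"
begin

text \<open>The argument of z chosen in the interval [t0, t0 + 2 pi):
  it is the representative of Arg z (which lies in (-pi, pi]) modulo 2 pi in that interval.\<close>
definition arg_branch :: "real \<Rightarrow> complex \<Rightarrow> real" where
  "arg_branch t0 z = t0 + 2 * pi * frac ((Arg z - t0) / (2 * pi))"

text \<open>hpow t0 k z is z^(k/2) = |z|^(k/2) exp(i k arg(z) / 2) with the branch above.\<close>
definition hpow :: "real \<Rightarrow> int \<Rightarrow> complex \<Rightarrow> complex" where
  "hpow t0 k z = complex_of_real (norm z powr (real_of_int k / 2))
                 * exp (\<i> * complex_of_real (real_of_int k * arg_branch t0 z / 2))"

text \<open>span of z^(lo/2), z^((lo+2)/2), ..., z^((lo+2(m-1))/2)  (m functions; zero space if m = 0).\<close>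
definition hspan :: "real \<Rightarrow> int \<Rightarrow> nat \<Rightarrow> (complex \<Rightarrow> complex) set" where
  "hspan t0 lo m = {f. \<exists>c :: nat \<Rightarrow> complex. f = (\<lambda>z. \<Sum>i<m. c i * hpow t0 (lo + 2 * int i) z)}"

definition msupport :: "complex measure \<Rightarrow> complex set" where
  "msupport M = {z. \<forall>e>0. emeasure M (ball z e) > 0}"

definition circle_measure :: "complex measure \<Rightarrow> bool" where
  "circle_measure M \<longleftrightarrow> sets M = sets borel \<and> finite_measure M
     \<and> emeasure M (- sphere 0 1) = 0 \<and> infinite (msupport M)"

definition total :: "nat \<Rightarrow> (nat \<Rightarrow> nat) \<Rightarrow> nat" where
  "total r ns = (\<Sum>j<r. ns j)"

text \<open>With N = |n|, phi = sum_{i=0}^N c_i z^((2i-N)/2); the coefficient of z^(N/2) is c_N.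
  Orthogonality: p = (2i - n_j)/2 for i = 0..n_j-1, so z^(-p) = z^((n_j - 2i)/2).
  By convention the zero multi-index is phi-normal.\<close>
definition phi_normal :: "real \<Rightarrow> nat \<Rightarrow> (nat \<Rightarrow> complex measure) \<Rightarrow> (nat \<Rightarrow> nat) \<Rightarrow> bool" where
  "phi_normal t0 r mus ns \<longleftrightarrow> total r ns = 0 \<or>
     (\<exists>!c :: nat \<Rightarrow> complex. (\<forall>i > total r ns. c i = 0) \<and> c (total r ns) = 1 \<and>
        (\<forall>j<r. \<forall>i<ns j.
           integral\<^sup>L (mus j) (\<lambda>z. (\<Sum>k\<le>total r ns. c k * hpow t0 (2 * int k - int (total r ns)) z)
                                  * hpow t0 (int (ns j) - 2 * int i) z) = 0))"

end

theory Submission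
  imports Defs "HOL-Computational_Algebra.Polynomial" "Jordan_Normal_Form.Determinant"
begin


lemma Arg_meas: "Arg \<in> borel_measurable borel"
proof -
  have c: "closed (\<real>\<^sub>\<le>\<^sub>0 :: complex set)" by (simp add: closed_nonpos_Reals_complex)
  have h1: "(\<lambda>z. if z \<in> -\<real>\<^sub>\<le>\<^sub>0 then Arg z else pi) \<in> borel_measurable borel"
    by (rule borel_measurable_continuous_on_if) (use c continuous_on_Arg in auto)
  have h2: "(\<lambda>z. if z \<in> {0} then 0 else (if z \<in> -\<real>\<^sub>\<le>\<^sub>0 then Arg z else pi)) \<in> borel_measurable borel"
    by (rule measurable_If_set) (use h1 in auto)
  have e: "(\<lambda>z. if z \<in> {0} then 0 else (if z \<in> -\<real>\<^sub>\<le>\<^sub>0 then Arg z else pi)) = Arg"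
  proof
    fix z :: complex
    show "(if z \<in> {0} then 0 else (if z \<in> -\<real>\<^sub>\<le>\<^sub>0 then Arg z else pi)) = Arg z"
    proof (cases "z = 0")
      case True then show ?thesis by (simp add: Arg_zero)
    next
      case False
      show ?thesis
      proof (cases "z \<in> \<real>\<^sub>\<le>\<^sub>0")
        case True
        then obtain x where x: "z = complex_of_real x" "x \<le> 0" by (rule nonpos_Reals_cases)
        with False have "x < 0" by auto
        then show ?thesis using x False True by simp
      next
        case f2: False then show ?thesis using False by simp
      qed
    qed
  qed
  show ?thesis using h2 e by simp
qed

lemma hpow_meas[measurable]: "hpow t0 k \<in> borel_measurable borel"
proof -
  have "(\<lambda>x::real. frac x) \<in> borel_measurable borel"
    unfolding frac_def using borel_measurable_real_floor by measurable
  then show ?thesis unfolding hpow_def arg_branch_def using Arg_meas by measurable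
qed

lemma hpow_mult: "z \<noteq> 0 \<Longrightarrow> hpow t0 a z * hpow t0 b z = hpow t0 (a + b) z"
  unfolding hpow_def
  by (simp add: powr_add add_divide_distrib distrib_right mult_exp_exp algebra_simps flip: exp_add)

lemma hpow_0: "z \<noteq> 0 \<Longrightarrow> hpow t0 0 z = 1"
  unfolding hpow_def by simp

lemma hpow_nz: "z \<noteq> 0 \<Longrightarrow> hpow t0 k z \<noteq> 0"
  unfolding hpow_def by simp

lemma hpow_at0: "hpow t0 k 0 = 0"
  unfolding hpow_def by simp

lemma Arg_refl: "z \<noteq> 0 \<Longrightarrow> Arg (1 / cnj z) = Arg z"
proof -
  have e: "1 / cnj z = inverse (cnj z)" by (simp add: inverse_eq_divide)
  have r: "cnj z \<in> \<real> \<longleftrightarrow> z \<in> \<real>" by (simp add: Reals_cnj_iff eq_commute)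
  show ?thesis unfolding e Arg_inverse Arg_cnj r by simp
qed

lemma hpow_refl: "z \<noteq> 0 \<Longrightarrow> cnj (hpow t0 k (1 / cnj z)) = hpow t0 (- k) z"
proof -
  assume z: "z \<noteq> 0"
  have ab: "arg_branch t0 (1 / cnj z) = arg_branch t0 z"
    unfolding arg_branch_def using Arg_refl[OF z] by simp
  have nn: "norm (1 / cnj z) = inverse (norm z)" by (simp add: norm_divide divide_inverse norm_inverse)
  have p: "inverse (norm z) powr (real_of_int k / 2) = norm z powr (real_of_int (- k) / 2)"
    using z by (simp add: powr_minus inverse_powr)
  have "cnj (hpow t0 k (1 / cnj z)) = complex_of_real (inverse (norm z) powr (real_of_int k / 2))
      * cnj (exp (\<i> * complex_of_real (real_of_int k * arg_branch t0 z / 2)))"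
    unfolding hpow_def ab nn by simp
  also have "cnj (exp (\<i> * complex_of_real (real_of_int k * arg_branch t0 z / 2)))
     = exp (\<i> * complex_of_real (real_of_int (-k) * arg_branch t0 z / 2))"
    by (simp add: exp_cnj)
  finally show ?thesis unfolding hpow_def p .
qed

lemma hpow_circ: "norm z = 1 \<Longrightarrow> cnj (hpow t0 k z) = hpow t0 (- k) z"
proof -
  assume n: "norm z = 1"
  have "z * cnj z = 1" using complex_norm_square[of z] n by simp
  then have "1 / cnj z = z"
    by (metis complex_cnj_zero_iff divide_eq_eq mult_zero_right zero_neq_one)
  moreover have "z \<noteq> 0" using n by auto
  ultimately show ?thesis using hpow_refl[of z t0 k] by simp
qed

lemma hpow_norm: "norm z = 1 \<Longrightarrow> norm (hpow t0 k z) = 1"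
  unfolding hpow_def by (simp add: norm_exp)



lemma circ_AE: assumes "circle_measure M" shows "AE z in M. norm z = 1"
proof (rule AE_I[of _ _ "- sphere 0 1"])
  show "{x \<in> space M. \<not> norm x = 1} \<subseteq> - sphere 0 1" by auto
  show "emeasure M (- sphere 0 1) = 0" using assms unfolding circle_measure_def by blast
  have s: "sets M = sets borel" using assms unfolding circle_measure_def by blast
  have "- sphere (0::complex) 1 \<in> sets borel" by (simp add: borel_closed)
  then show "- sphere 0 1 \<in> sets M" using s by simp
qed

lemma circ_meas: assumes "circle_measure M" "f \<in> borel_measurable borel" shows "f \<in> borel_measurable M"
proof -
  have s: "sets M = sets borel" using assms unfolding circle_measure_def by blast
  show ?thesis by (subst measurable_cong_sets[OF s refl]) (rule assms(2))
qed

lemma hh_int: assumes "circle_measure M"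
  shows "integrable M (\<lambda>z. c * (hpow t0 a z * hpow t0 b z))"
proof -
  have fm: "finite_measure M" using assms unfolding circle_measure_def by simp
  have ae: "AE z in M. norm (c * (hpow t0 a z * hpow t0 b z)) \<le> norm c"
  proof (rule eventually_mono[OF circ_AE[OF assms]])
    fix z :: complex assume "norm z = 1"
    then show "norm (c * (hpow t0 a z * hpow t0 b z)) \<le> norm c"
      by (simp add: norm_mult hpow_norm)
  qed
  have me: "(\<lambda>z. c * (hpow t0 a z * hpow t0 b z)) \<in> borel_measurable M"
    by (rule circ_meas[OF assms]) measurable
  show ?thesis by (rule finite_measure.integrable_const_bound[OF fm ae me])
qed


lemma cnj_meas: "g \<in> borel_measurable M \<Longrightarrow> (\<lambda>x. cnj (g x)) \<in> borel_measurable M"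
proof -
  assume g: "g \<in> borel_measurable M"
  have c: "continuous_on UNIV cnj" using bounded_linear_cnj linear_continuous_on by blast
  show ?thesis by (rule borel_measurable_continuous_on[OF c g])
qed

lemma int_lin: assumes "circle_measure M"
  shows "integral\<^sup>L M (\<lambda>z. (\<Sum>k\<in>K. c k * hpow t0 (a k) z) * hpow t0 m z)
       = (\<Sum>k\<in>K. c k * integral\<^sup>L M (\<lambda>z. hpow t0 (a k) z * hpow t0 m z))"
proof -
  have e: "(\<lambda>z. (\<Sum>k\<in>K. c k * hpow t0 (a k) z) * hpow t0 m z)
      = (\<lambda>z. (\<Sum>k\<in>K. c k * (hpow t0 (a k) z * hpow t0 m z)))"
    by (rule ext) (simp only: sum_distrib_right mult.assoc)
  have "integral\<^sup>L M (\<lambda>z. (\<Sum>k\<in>K. c k * (hpow t0 (a k) z * hpow t0 m z)))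
     = (\<Sum>k\<in>K. integral\<^sup>L M (\<lambda>z. c k * (hpow t0 (a k) z * hpow t0 m z)))"
    proof (rule Bochner_Integration.integral_sum)
    fix i assume "i \<in> K"
    show "integrable M (\<lambda>z. c i * (hpow t0 (a i) z * hpow t0 m z))"
      using hh_int[OF assms, of "c i" t0 "a i" m] .
  qed
  also have "\<dots> = (\<Sum>k\<in>K. c k * integral\<^sup>L M (\<lambda>z. hpow t0 (a k) z * hpow t0 m z))"
    by (simp only: integral_mult_right_zero)
  finally show ?thesis unfolding e .
qed

lemma int_shift: assumes "circle_measure M" "a + b = a' + b'"
  shows "integral\<^sup>L M (\<lambda>z. hpow t0 a z * hpow t0 b z) = integral\<^sup>L M (\<lambda>z. hpow t0 a' z * hpow t0 b' z)"
proof (rule integral_cong_AE)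
  show "(\<lambda>z. hpow t0 a z * hpow t0 b z) \<in> borel_measurable M"
    by (rule circ_meas[OF assms(1)]) measurable
  show "(\<lambda>z. hpow t0 a' z * hpow t0 b' z) \<in> borel_measurable M"
    by (rule circ_meas[OF assms(1)]) measurable
  show "AE z in M. hpow t0 a z * hpow t0 b z = hpow t0 a' z * hpow t0 b' z"
  proof (rule eventually_mono[OF circ_AE[OF assms(1)]])
    fix z :: complex assume "norm z = 1"
    then have "z \<noteq> 0" by auto
    have "hpow t0 a z * hpow t0 b z = hpow t0 (a + b) z" by (rule hpow_mult[OF \<open>z \<noteq> 0\<close>])
    also have "\<dots> = hpow t0 (a' + b') z" using assms(2) by simp
    also have "\<dots> = hpow t0 a' z * hpow t0 b' z" by (rule hpow_mult[OF \<open>z \<noteq> 0\<close>, symmetric])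
    finally show "hpow t0 a z * hpow t0 b z = hpow t0 a' z * hpow t0 b' z" .
  qed
qed

lemma int_sym: assumes "circle_measure M"
  shows "integral\<^sup>L M (\<lambda>z. hpow t0 a z * hpow t0 b z)
       = cnj (integral\<^sup>L M (\<lambda>z. hpow t0 (- a) z * hpow t0 (- b) z))"
proof -
  have "integral\<^sup>L M (\<lambda>z. hpow t0 a z * hpow t0 b z)
       = integral\<^sup>L M (\<lambda>z. cnj (hpow t0 (- a) z * hpow t0 (- b) z))"
  proof (rule integral_cong_AE)
    show "(\<lambda>z. hpow t0 a z * hpow t0 b z) \<in> borel_measurable M"
      by (rule circ_meas[OF assms(1)]) measurable
    show "(\<lambda>z. cnj (hpow t0 (- a) z * hpow t0 (- b) z)) \<in> borel_measurable M"
      by (rule cnj_meas, rule circ_meas[OF assms(1)]) measurable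
    show "AE z in M. hpow t0 a z * hpow t0 b z = cnj (hpow t0 (- a) z * hpow t0 (- b) z)"
    proof (rule eventually_mono[OF circ_AE[OF assms(1)]])
      fix z :: complex assume n: "norm z = 1"
      have "cnj (hpow t0 (- a) z * hpow t0 (- b) z) = cnj (hpow t0 (- a) z) * cnj (hpow t0 (- b) z)" by (rule complex_cnj_mult)
      also have "\<dots> = hpow t0 a z * hpow t0 b z" unfolding hpow_circ[OF n] by simp
      finally show "hpow t0 a z * hpow t0 b z = cnj (hpow t0 (- a) z * hpow t0 (- b) z)" by simp
    qed
  qed
  also have "\<dots> = cnj (integral\<^sup>L M (\<lambda>z. hpow t0 (- a) z * hpow t0 (- b) z))"
    by (rule Bochner_Integration.integral_cnj)
  finally show ?thesis .
qed

definition fs :: "real \<Rightarrow> nat \<Rightarrow> (nat \<Rightarrow> complex) \<Rightarrow> complex \<Rightarrow> complex" where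
  "fs t0 N c = (\<lambda>z. \<Sum>b<N. c b * hpow t0 (1 - int N + 2 * int b) z)"

lemma hpow_2b: "z \<noteq> 0 \<Longrightarrow> hpow t0 (2 * int b) z = (hpow t0 2 z) ^ b"
proof (induction b)
  case 0 then show ?case by (simp add: hpow_0)
next
  case (Suc b)
  have "hpow t0 (2 * int (Suc b)) z = hpow t0 (2 * int b) z * hpow t0 2 z"
    using hpow_mult[OF Suc.prems, of t0 "2 * int b" 2] by (simp add: algebra_simps)
  then show ?case using Suc by simp
qed

lemma fs_poly: assumes "z \<noteq> 0"
  shows "fs t0 N c z = hpow t0 (1 - int N) z * poly (\<Sum>b<N. monom (c b) b) (hpow t0 2 z)"
proof -
  have "fs t0 N c z = (\<Sum>b<N. hpow t0 (1 - int N) z * (c b * (hpow t0 2 z) ^ b))"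
    unfolding fs_def
  proof (rule sum.cong)
    fix b assume "b \<in> {..<N}"
    have "hpow t0 (1 - int N + 2 * int b) z = hpow t0 (1 - int N) z * hpow t0 (2 * int b) z"
      using hpow_mult[OF assms] by simp
    then show "c b * hpow t0 (1 - int N + 2 * int b) z = hpow t0 (1 - int N) z * (c b * (hpow t0 2 z) ^ b)"
      using hpow_2b[OF assms] by simp
  qed simp
  then show ?thesis by (simp add: poly_sum poly_monom sum_distrib_left)
qed

lemma indep: assumes "b < N" "c b \<noteq> 0" shows "fs t0 N c \<noteq> (\<lambda>z. 0)"
proof
  assume f0: "fs t0 N c = (\<lambda>z. 0)"
  define p where "p = (\<Sum>b<N. monom (c b) b)"
  have "coeff p b = c b" unfolding p_def using assms(1)
    by (simp add: coeff_sum coeff_monom)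
  then have pnz: "p \<noteq> 0" using assms(2) by auto
  define h where "h = (\<lambda>x::real. hpow t0 2 (complex_of_real x))"
  have nh: "norm (h x) = x" if "x > 0" for x
    using that unfolding h_def hpow_def by (simp add: norm_mult)
  have inj: "inj_on h {0<..}"
    by (rule inj_onI) (metis greaterThan_iff nh)
  have sub: "h ` {0<..} \<subseteq> {x. poly p x = 0}"
  proof
    fix w assume "w \<in> h ` {0<..}"
    then obtain x where x: "x > 0" "w = h x" by auto
    have "complex_of_real x \<noteq> 0" using x by simp
    from fs_poly[OF this, of t0 N c] f0 hpow_nz[OF this]
    have "poly p (h x) = 0" unfolding h_def p_def by (metis mult_eq_0_iff)
    then show "w \<in> {x. poly p x = 0}" using x by simp
  qed
  have "finite (h ` {0<..})" using finite_subset[OF sub poly_roots_finite[OF pnz]] .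
  then have "finite {0::real<..}" using finite_imageD inj by blast
  then show False using infinite_Ioi by blast
qed



lemma fs_add: "fs t0 N (\<lambda>b. c b + d b) z = fs t0 N c z + fs t0 N d z"
  unfolding fs_def by (simp add: distrib_right sum.distrib)

lemma fs_smult: "fs t0 N (\<lambda>b. a * c b) z = a * fs t0 N c z"
  unfolding fs_def by (simp add: sum_distrib_left mult.assoc)

lemma fs_zero: "(\<And>b. b < N \<Longrightarrow> c b = 0) \<Longrightarrow> fs t0 N c = (\<lambda>z. 0)"
  unfolding fs_def by (rule ext) simp

lemma sum_atMost_split: "(\<Sum>k\<le>(N::nat). f k) = (\<Sum>k<N. f k) + f N"
  by (simp add: lessThan_Suc_atMost[symmetric])

lemma inv_cnj_inv: "z \<noteq> 0 \<Longrightarrow> 1 / cnj (1 / cnj z) = (z::complex)"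
  by simp

lemma fs_sym:
  assumes z: "z \<noteq> 0"
  shows "fs t0 N (\<lambda>b. \<tau> * cnj (c (N - Suc b))) z = \<tau> * cnj (fs t0 N c (1 / cnj z))"
proof -
  have "\<tau> * cnj (fs t0 N c (1 / cnj z))
      = (\<Sum>b<N. \<tau> * cnj (c b) * hpow t0 (- (1 - int N + 2 * int b)) z)"
    unfolding fs_def by (simp add: sum_distrib_left hpow_refl[OF z] mult.assoc)
  also have "\<dots> = (\<Sum>b<N. \<tau> * cnj (c (N - Suc b)) * hpow t0 (- (1 - int N + 2 * int (N - Suc b))) z)"
    by (rule sum.nat_diff_reindex[symmetric])
  also have "\<dots> = (\<Sum>b<N. \<tau> * cnj (c (N - Suc b)) * hpow t0 (1 - int N + 2 * int b) z)"
  proof (rule sum.cong)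
    fix b assume "b \<in> {..<N}"
    then have e: "- (1 - int N + 2 * int (N - Suc b)) = 1 - int N + 2 * int b" by (simp add: of_nat_diff)
    show "\<tau> * cnj (c (N - Suc b)) * hpow t0 (- (1 - int N + 2 * int (N - Suc b))) z
       = \<tau> * cnj (c (N - Suc b)) * hpow t0 (1 - int N + 2 * int b) z" by (simp only: e)
  qed simp
  finally show ?thesis unfolding fs_def by simp
qed

theorem proposition3p3:
  fixes t0 :: real and r :: nat and mus :: "nat \<Rightarrow> complex measure"
    and ns :: "nat \<Rightarrow> nat" and \<tau> :: complex
  assumes "\<And>j. j < r \<Longrightarrow> circle_measure (mus j)"
    and "norm \<tau> = 1"
  shows "phi_normal t0 r mus ns \<longleftrightarrow>
    \<not> (\<exists>X \<in> hspan t0 (1 - int (total r ns)) (total r ns).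
          X \<noteq> (\<lambda>z. 0)
        \<and> (\<forall>z. z \<noteq> 0 \<longrightarrow> X z = \<tau> * cnj (X (1 / cnj z)))
        \<and> (\<forall>j<r. \<forall>i<ns j.
             integral\<^sup>L (mus j) (\<lambda>z. X z * hpow t0 (int (ns j) - 1 - 2 * int i) z) = 0))"
proof -
  define N where "N = total r ns"
  define Q where "Q = (\<lambda>j i b. integral\<^sup>L (mus j) (\<lambda>z. hpow t0 (1 - int N + 2 * int b) z * hpow t0 (int (ns j) - 1 - 2 * int i) z))"
  define K where "K = (\<lambda>c. \<forall>j<r. \<forall>i<ns j. (\<Sum>b<N. c b * Q j i b) = 0)"
  define P where "P = (\<lambda>c. (\<forall>i>N. c i = (0::complex)) \<and> c N = 1 \<and> (\<forall>j<r. \<forall>i<ns j. (\<Sum>k\<le>N. c k * Q j i k) = 0))"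
  define SY where "SY = (\<lambda>X::complex\<Rightarrow>complex. \<forall>z. z \<noteq> 0 \<longrightarrow> X z = \<tau> * cnj (X (1 / cnj z)))"
  have intX: "integral\<^sup>L (mus j) (\<lambda>z. fs t0 N c z * hpow t0 (int (ns j) - 1 - 2 * int i) z) = (\<Sum>b<N. c b * Q j i b)"
    if "j < r" for c j i
    unfolding fs_def Q_def by (rule int_lin[OF assms(1)[OF that]])
  have intP: "integral\<^sup>L (mus j) (\<lambda>z. (\<Sum>k\<le>N. c k * hpow t0 (2 * int k - int N) z) * hpow t0 (int (ns j) - 2 * int i) z)
      = (\<Sum>k\<le>N. c k * Q j i k)" if "j < r" for c j i
  proof -
    have "integral\<^sup>L (mus j) (\<lambda>z. (\<Sum>k\<le>N. c k * hpow t0 (2 * int k - int N) z) * hpow t0 (int (ns j) - 2 * int i) z)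
      = (\<Sum>k\<le>N. c k * integral\<^sup>L (mus j) (\<lambda>z. hpow t0 (2 * int k - int N) z * hpow t0 (int (ns j) - 2 * int i) z))"
      by (rule int_lin[OF assms(1)[OF that]])
    also have "\<dots> = (\<Sum>k\<le>N. c k * Q j i k)"
    proof (rule sum.cong)
      fix k assume "k \<in> {..N}"
      have "integral\<^sup>L (mus j) (\<lambda>z. hpow t0 (2 * int k - int N) z * hpow t0 (int (ns j) - 2 * int i) z) = Q j i k"
        unfolding Q_def by (rule int_shift[OF assms(1)[OF that]]) simp
      then show "c k * integral\<^sup>L (mus j) (\<lambda>z. hpow t0 (2 * int k - int N) z * hpow t0 (int (ns j) - 2 * int i) z) = c k * Q j i k"
        by simp
    qed simp
    finally show ?thesis .
  qed
  have PHI: "phi_normal t0 r mus ns \<longleftrightarrow> N = 0 \<or> (\<exists>!c. P c)"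
    unfolding phi_normal_def N_def[symmetric] P_def using intP by simp
  have hs: "hspan t0 (1 - int N) N = range (fs t0 N)" unfolding hspan_def fs_def by auto
  have RHS: "(\<exists>X \<in> hspan t0 (1 - int (total r ns)) (total r ns).
          X \<noteq> (\<lambda>z. 0)
        \<and> (\<forall>z. z \<noteq> 0 \<longrightarrow> X z = \<tau> * cnj (X (1 / cnj z)))
        \<and> (\<forall>j<r. \<forall>i<ns j.
             integral\<^sup>L (mus j) (\<lambda>z. X z * hpow t0 (int (ns j) - 1 - 2 * int i) z) = 0))
     \<longleftrightarrow> (\<exists>c. fs t0 N c \<noteq> (\<lambda>z. 0) \<and> SY (fs t0 N c) \<and> K c)"
    unfolding N_def[symmetric] hs K_def SY_def using intX by auto
  have main: "phi_normal t0 r mus ns \<longleftrightarrow> \<not> (\<exists>c. fs t0 N c \<noteq> (\<lambda>z. 0) \<and> SY (fs t0 N c) \<and> K c)"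
  proof (cases "N = 0")
    case True
    then show ?thesis unfolding PHI fs_def by simp
  next
    case Npos: False
    show ?thesis
    proof
      assume "phi_normal t0 r mus ns"
      then have "\<exists>!c. P c" using PHI Npos by simp
      then obtain c0 where c0: "P c0" and uq: "\<And>c. P c \<Longrightarrow> c = c0" by auto
      show "\<not> (\<exists>c. fs t0 N c \<noteq> (\<lambda>z. 0) \<and> SY (fs t0 N c) \<and> K c)"
      proof
        assume "\<exists>c. fs t0 N c \<noteq> (\<lambda>z. 0) \<and> SY (fs t0 N c) \<and> K c"
        then obtain c where fc: "fs t0 N c \<noteq> (\<lambda>z. 0)" and Kc: "K c" by auto
        have "\<exists>b<N. c b \<noteq> 0"
        proof (rule ccontr)
          assume "\<not> (\<exists>b<N. c b \<noteq> 0)"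
          then have "fs t0 N c = (\<lambda>z. 0)" by (intro fs_zero) auto
          with fc show False by simp
        qed
        then obtain b where b: "b < N" "c b \<noteq> 0" by blast
        define c1 where "c1 = (\<lambda>k. if k < N then c0 k + c k else c0 k)"
        have "P c1"
          unfolding P_def
        proof (intro conjI allI impI)
          fix i assume "i > N" then show "c1 i = 0" using c0 unfolding P_def c1_def by simp
        next
          show "c1 N = 1" using c0 unfolding P_def c1_def by simp
        next
          fix j i assume j: "j < r" and i: "i < ns j"
          have "(\<Sum>k<N. c1 k * Q j i k) = (\<Sum>k<N. c0 k * Q j i k + c k * Q j i k)"
            unfolding c1_def by (rule sum.cong) (auto simp: distrib_right)
          also have "\<dots> = (\<Sum>k<N. c0 k * Q j i k) + (\<Sum>k<N. c k * Q j i k)" by (rule sum.distrib)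
          also have "\<dots> = (\<Sum>k<N. c0 k * Q j i k)"
          proof -
            have "(\<Sum>k<N. c k * Q j i k) = 0" using Kc j i unfolding K_def by blast
            then show ?thesis by (simp only: add_0_right)
          qed
          finally have e1: "(\<Sum>k<N. c1 k * Q j i k) = (\<Sum>k<N. c0 k * Q j i k)" .
          have "(\<Sum>k\<le>N. c1 k * Q j i k) = (\<Sum>k<N. c1 k * Q j i k) + c1 N * Q j i N" by (rule sum_atMost_split)
          also have "\<dots> = (\<Sum>k<N. c0 k * Q j i k) + c0 N * Q j i N"
          proof -
            have "c1 N = c0 N" by (simp add: c1_def)
            then show ?thesis by (simp only: e1)
          qed
          also have "\<dots> = (\<Sum>k\<le>N. c0 k * Q j i k)" by (rule sum_atMost_split[symmetric])
          also have "\<dots> = 0" using c0 j i unfolding P_def by simp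
          finally show "(\<Sum>k\<le>N. c1 k * Q j i k) = 0" .
        qed
        then have "c1 = c0" by (rule uq)
        then have "c1 b = c0 b" by simp
        with b show False unfolding c1_def by simp
      qed
    next
      assume nx: "\<not> (\<exists>c. fs t0 N c \<noteq> (\<lambda>z. 0) \<and> SY (fs t0 N c) \<and> K c)"
      show "phi_normal t0 r mus ns"
      proof (rule ccontr)
        assume nphi: "\<not> phi_normal t0 r mus ns"
        then have nu: "\<not> (\<exists>!c. P c)" using PHI by simp
        define S where "S = (SIGMA j:{..<r}. {..<ns j})"
        have finS: "finite S" unfolding S_def by auto
        have "card S = N" unfolding S_def N_def total_def by (simp add: card_SigmaI)
        then have "card {..<N} = card S" by simp
        then obtain g where g: "bij_betw g {..<N} S" using finite_same_card_bij[OF _ finS] by blast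
        have gS: "\<exists>a<N. g a = (j, i)" if "j < r" "i < ns j" for j i
        proof -
          have "(j, i) \<in> S" unfolding S_def using that by simp
          then have "(j, i) \<in> g ` {..<N}" using g unfolding bij_betw_def by simp
          then show ?thesis by force
        qed
        have gS2: "fst (g a) < r \<and> snd (g a) < ns (fst (g a))" if "a < N" for a
        proof -
          have "g a \<in> S" using g that unfolding bij_betw_def by auto
          then show ?thesis unfolding S_def by (cases "g a") auto
        qed
        define Am where "Am = Matrix.mat N N (\<lambda>(a,b). Q (fst (g a)) (snd (g a)) b)"
        have Acar: "Am \<in> carrier_mat N N" unfolding Am_def by simp
        have Av: "(Am *\<^sub>v v) $ a = (\<Sum>b<N. v $ b * Q (fst (g a)) (snd (g a)) b)"
          if "v \<in> carrier_vec N" "a < N" for v a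
        proof -
          have "(Am *\<^sub>v v) $ a = row Am a \<bullet> v" using that Acar by simp
          also have "\<dots> = (\<Sum>b\<in>{0..<N}. row Am a $ b * v $ b)" using that by (simp add: scalar_prod_def)
          also have "\<dots> = (\<Sum>b<N. v $ b * Q (fst (g a)) (snd (g a)) b)"
            unfolding atLeast0LessThan
            by (rule sum.cong) (use that in \<open>auto simp: Am_def\<close>)
          finally show ?thesis .
        qed
        have detz: "det Am = 0"
        proof (rule ccontr)
          assume dnz: "det Am \<noteq> 0"
          have ker: "v = 0\<^sub>v N" if "v \<in> carrier_vec N" "Am *\<^sub>v v = 0\<^sub>v N" for v
            using det_0_iff_vec_prod_zero[OF Acar] dnz that by blast
          from det_non_zero_imp_unit[OF Acar dnz, of undefined]
          obtain B where B: "B \<in> carrier_mat N N" "Am * B = 1\<^sub>m N"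
            by (auto simp: Units_def ring_mat_simps)
          define bv where "bv = Matrix.vec N (\<lambda>a. - Q (fst (g a)) (snd (g a)) N)"
          have bvc: "bv \<in> carrier_vec N" unfolding bv_def by simp
          define x where "x = B *\<^sub>v bv"
          have xc: "x \<in> carrier_vec N" unfolding x_def using B bvc by simp
          have "Am *\<^sub>v x = (Am * B) *\<^sub>v bv" unfolding x_def
            by (rule assoc_mult_mat_vec[symmetric, OF Acar B(1) bvc])
          also have "\<dots> = bv" unfolding B(2) by (rule one_mult_mat_vec[OF bvc])
          finally have Ax: "Am *\<^sub>v x = bv" .
          define c where "c = (\<lambda>k. if k < N then x $ k else if k = N then 1 else (0::complex))"
          have Pc: "P c"
          proof -
            have "(\<Sum>k\<le>N. c k * Q j i k) = 0" if j: "j<r" and i: "i<ns j" for j i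
            proof -
              obtain a where a: "a < N" "g a = (j,i)" using gS j i by blast
              have "(\<Sum>k<N. c k * Q j i k) = (\<Sum>k<N. x $ k * Q j i k)"
                unfolding c_def by (rule sum.cong) auto
              also have "\<dots> = (Am *\<^sub>v x) $ a" using Av[OF xc a(1)] a(2) by simp
              also have "\<dots> = - Q j i N" using Ax a unfolding bv_def by simp
              finally have "(\<Sum>k<N. c k * Q j i k) = - Q j i N" .
              moreover have "c N = 1" unfolding c_def by simp
              ultimately show ?thesis by (simp add: sum_atMost_split)
            qed
            then show ?thesis unfolding P_def c_def by simp
          qed
          have "\<exists>!c. P c"
          proof (rule ex1I[of P c, OF Pc])
            fix d assume Pd: "P d"
            define v where "v = Matrix.vec N (\<lambda>k. d k - c k)"
            have vc: "v \<in> carrier_vec N" unfolding v_def by simp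
            have "Am *\<^sub>v v = 0\<^sub>v N"
            proof (rule eq_vecI)
              fix a assume a: "a < dim_vec (0\<^sub>v N :: complex Matrix.vec)"
              then have a': "a < N" by simp
              obtain j i where gi: "g a = (j,i)" by (cases "g a")
              have j: "j < r" and i: "i < ns j" using gS2[OF a'] gi by auto
              have "(Am *\<^sub>v v) $ a = (\<Sum>b<N. v $ b * Q j i b)" using Av[OF vc a'] gi by simp
              also have "\<dots> = (\<Sum>b<N. (d b - c b) * Q j i b)" unfolding v_def by (rule sum.cong) auto
              also have "\<dots> = (\<Sum>b\<le>N. (d b - c b) * Q j i b)" using Pd Pc unfolding P_def by (simp add: sum_atMost_split)
              also have "\<dots> = (\<Sum>b\<le>N. d b * Q j i b) - (\<Sum>b\<le>N. c b * Q j i b)"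
                by (simp add: left_diff_distrib sum_subtractf)
              also have "\<dots> = 0" using Pd Pc j i unfolding P_def by simp
              finally show "(Am *\<^sub>v v) $ a = 0\<^sub>v N $ a" using a' by simp
            qed (use Acar in simp)
            then have v0: "v = 0\<^sub>v N" using ker vc by blast
            have dk: "d k = c k" if "k < N" for k
            proof -
              have "v $ k = 0" using v0 that by simp
              then show ?thesis using that unfolding v_def by simp
            qed
            show "d = c"
            proof
              fix k
              show "d k = c k"
              proof (cases "k < N")
                case True then show ?thesis by (rule dk)
              next
                case False
                then show ?thesis using Pd Pc unfolding P_def
                  by (cases "k = N") auto
              qed
            qed
          qed
          with nu show False by simp
        qed
        then obtain v where v: "v \<in> carrier_vec N" "v \<noteq> 0\<^sub>v N" "Am *\<^sub>v v = 0\<^sub>v N"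
          using det_0_iff_vec_prod_zero[OF Acar] by blast
        define c where "c = (\<lambda>b. v $ b)"
        have Kc: "K c" unfolding K_def
        proof (intro allI impI)
          fix j i assume j: "j<r" and i: "i < ns j"
          obtain a where a: "a < N" "g a = (j,i)" using gS j i by blast
          have "(Am *\<^sub>v v) $ a = 0" using v(3) a by simp
          then show "(\<Sum>b<N. c b * Q j i b) = 0" using Av[OF v(1) a(1)] a(2) unfolding c_def by simp
        qed
        have "\<exists>b<N. c b \<noteq> 0"
        proof (rule ccontr)
          assume "\<not> (\<exists>b<N. c b \<noteq> 0)"
          then have "v = 0\<^sub>v N" using v(1) unfolding c_def by (intro eq_vecI) auto
          with v(2) show False by simp
        qed
        then obtain b where b: "b < N" "c b \<noteq> 0" by blast
        have fc: "fs t0 N c \<noteq> (\<lambda>z. 0)" by (rule indep[of b N c, OF b])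
        define cs where "cs = (\<lambda>b. \<tau> * cnj (c (N - Suc b)))"
        have tt: "\<tau> * cnj \<tau> = 1" using assms(2) complex_norm_square[of \<tau>] by simp
        have fcs: "fs t0 N cs z = \<tau> * cnj (fs t0 N c (1 / cnj z))" if "z \<noteq> 0" for z
          unfolding cs_def by (rule fs_sym[OF that])
        have Qs: "Q j i b = cnj (Q j (ns j - Suc i) (N - Suc b))" if "j < r" "i < ns j" "b < N" for j i b
        proof -
          have e1: "-(1 - int N + 2*int b) = 1 - int N + 2 * int (N - Suc b)" using that(3) by (simp add: of_nat_diff)
          have e2: "-(int (ns j) - 1 - 2*int i) = int (ns j) - 1 - 2 * int (ns j - Suc i)" using that(2) by (simp add: of_nat_diff)
          have "Q j i b = cnj (integral\<^sup>L (mus j) (\<lambda>z. hpow t0 (-(1 - int N + 2*int b)) z * hpow t0 (-(int (ns j) - 1 - 2*int i)) z))"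
            unfolding Q_def by (rule int_sym[OF assms(1)[OF that(1)]])
          then show ?thesis unfolding Q_def e1 e2 .
        qed
        have Kcs: "K cs" unfolding K_def
        proof (intro allI impI)
          fix j i assume j: "j<r" and i: "i < ns j"
          have i': "ns j - Suc i < ns j" using i by simp
          have "(\<Sum>b<N. cs b * Q j i b) = (\<Sum>b<N. \<tau> * cnj (c (N - Suc b) * Q j (ns j - Suc i) (N - Suc b)))"
            unfolding cs_def by (rule sum.cong) (use Qs[OF j i] in auto)
          also have "\<dots> = \<tau> * cnj (\<Sum>b<N. c (N - Suc b) * Q j (ns j - Suc i) (N - Suc b))"
            by (simp add: sum_distrib_left)
          also have "(\<Sum>b<N. c (N - Suc b) * Q j (ns j - Suc i) (N - Suc b)) = (\<Sum>b<N. c b * Q j (ns j - Suc i) b)"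
            by (rule sum.nat_diff_reindex)
          also have "(\<Sum>b<N. c b * Q j (ns j - Suc i) b) = 0" using Kc j i' unfolding K_def by simp
          finally show "(\<Sum>b<N. cs b * Q j i b) = 0" by simp
        qed
        show False
        proof (cases "fs t0 N (\<lambda>b. c b + cs b) = (\<lambda>z. 0)")
          case False
          have "SY (fs t0 N (\<lambda>b. c b + cs b))" unfolding SY_def
          proof (intro allI impI)
            fix z :: complex assume z: "z \<noteq> 0"
            have w: "1 / cnj z \<noteq> 0" using z by simp
            have e1: "fs t0 N cs (1 / cnj z) = \<tau> * cnj (fs t0 N c z)" using fcs[OF w] z by simp
            have "\<tau> * cnj (fs t0 N (\<lambda>b. c b + cs b) (1 / cnj z))
                = \<tau> * cnj (fs t0 N c (1 / cnj z)) + \<tau> * cnj (fs t0 N cs (1 / cnj z))"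
              by (simp add: fs_add distrib_left)
            also have "\<dots> = fs t0 N cs z + (\<tau> * cnj \<tau>) * fs t0 N c z"
              unfolding e1 fcs[OF z, symmetric] by simp
            also have "\<dots> = fs t0 N (\<lambda>b. c b + cs b) z" unfolding tt by (simp add: fs_add)
            finally show "fs t0 N (\<lambda>b. c b + cs b) z = \<tau> * cnj (fs t0 N (\<lambda>b. c b + cs b) (1 / cnj z))" by simp
          qed
          moreover have "K (\<lambda>b. c b + cs b)" using Kc Kcs unfolding K_def by (simp add: distrib_right sum.distrib)
          ultimately show False using nx False by blast
        next
          case True
          have neg: "fs t0 N cs z = - fs t0 N c z" for z
          proof -
            have "fs t0 N c z + fs t0 N cs z = 0" using fun_cong[OF True, of z] by (simp add: fs_add)
            then show ?thesis by (simp add: eq_neg_iff_add_eq_0 add.commute)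
          qed
          have "fs t0 N (\<lambda>b. \<i> * c b) \<noteq> (\<lambda>z. 0)"
          proof
            assume "fs t0 N (\<lambda>b. \<i> * c b) = (\<lambda>z. 0)"
            then have "fs t0 N c = (\<lambda>z. 0)" by (simp add: fs_smult fun_eq_iff)
            with fc show False by simp
          qed
          moreover have "SY (fs t0 N (\<lambda>b. \<i> * c b))" unfolding SY_def
          proof (intro allI impI)
            fix z :: complex assume z: "z \<noteq> 0"
            have "\<tau> * cnj (fs t0 N (\<lambda>b. \<i> * c b) (1 / cnj z)) = - \<i> * (\<tau> * cnj (fs t0 N c (1 / cnj z)))"
              by (simp add: fs_smult)
            also have "\<dots> = - \<i> * fs t0 N cs z" using fcs[OF z] by simp
            also have "\<dots> = \<i> * fs t0 N c z" by (simp add: neg)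
            also have "\<dots> = fs t0 N (\<lambda>b. \<i> * c b) z" by (simp add: fs_smult)
            finally show "fs t0 N (\<lambda>b. \<i> * c b) z = \<tau> * cnj (fs t0 N (\<lambda>b. \<i> * c b) (1 / cnj z))" by simp
          qed
          moreover have "K (\<lambda>b. \<i> * c b)" using Kc unfolding K_def
            by (simp add: mult.assoc flip: sum_distrib_left)
          ultimately show False using nx by blast
        qed
      qed
    qed
  qed
  show ?thesis using main RHS by simp
qed


end
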